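(* In the setting below, suppose $X_0$ is almost surely constant, $\mathbb{P}(A_1\ne a_1)>0$, and for some $s\in\{1,\dots,t\}$ we have $\mathbb{P}(X_s(A_{1:s})=x_s)=0$ for all $x_s\in\mathcal{X}_s$. Then measurable $\underline g,\overline g:\mathcal{X}_{0:t}\to\mathbb{R}$ are permissible bounds only if they are trivial, i.e. only if $\underline g(X_{0:t}(a_{1:t}))\le\underline y(X_{0:t}(a_{1:t}))$ and $\overline g(X_{0:t}(a_{1:t}))\ge\overline y(X_{0:t}(a_{1:t}))$ almost surely.
   Context: Horizon $T\ge1$, $\mathcal{X}_t=\mathbb{R}^{d_t}$, finite action spaces $\mathcal{A}_t$; potential outcomes $X_0$, $X_r(a'_{1:r})\in\mathcal{X}_r$, random actions $A_{1:T}$ ($A_r\in\mathcal{A}_r$), and real-valued potential outcomes $Y(a'_{1:t})$, all defined jointly; $X_{0:t}(a_{1:t})=(X_0,X_1(a_1),\dots,X_t(a_{1:t}))$, and quantities evaluated at $A$ denote the potential outcome indexed by the realized actions. Fix $t\in\{1,\dots,T\}$, $a_{1:t}\in\mathcal{A}_{1:t}$, and measurable $\underline y,\overline y:\mathcal{X}_{0:t}\to\mathbb{R}$ with $\underline y(X_{0:t}(a_{1:t}))\le Y(a_{1:t})\le\overline y(X_{0:t}(a_{1:t}))$ almost surely. A pair $\underline g,\overline g:\mathcal{X}_{0:t}\to\mathbb{R}$ is permissible if, for every family of potential outcomes and actions $(\tilde X_{0:T}(a'_{1:T}),\tilde Y(a'_{1:t}),\tilde A_{1:T}:a'_{1:T}\in\mathcal{A}_{1:T})$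 with $\mathrm{Law}[\tilde X_{0:T}(\tilde A_{1:T}),\tilde A_{1:T},\tilde Y(\tilde A_{1:t})]=\mathrm{Law}[X_{0:T}(A_{1:T}),A_{1:T},Y(A_{1:t})]$ and $\underline y(\tilde X_{0:t}(a_{1:t}))\le\tilde Y(a_{1:t})\le\overline y(\tilde X_{0:t}(a_{1:t}))$ a.s., it holds that $\underline g(\tilde X_{0:t}(a_{1:t}))\le\mathbb{E}[\tilde Y(a_{1:t})\mid\tilde X_{0:t}(a_{1:t})]\le\overline g(\tilde X_{0:t}(a_{1:t}))$ almost surely. *)

theory Defs
  imports "HOL-Probability.Probability"
begin

text \<open>Outcome space X_r = R^(d r), rendered as extensional functions on the index set
  {..< d r} with the product Borel sigma-algebra.\<close>
definition XS :: "(nat \<Rightarrow> nat) \<Rightarrow> nat \<Rightarrow> (nat \<Rightarrow> real) measure" where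
  "XS d r = PiM {..<d r} (\<lambda>_. (borel :: real measure))"

definition HX :: "(nat \<Rightarrow> nat) \<Rightarrow> nat \<Rightarrow> (nat \<Rightarrow> nat \<Rightarrow> real) measure" where
  "HX d t = PiM {..t} (\<lambda>r. XS d r)"

definition AS :: "(nat \<Rightarrow> 'act set) \<Rightarrow> nat \<Rightarrow> (nat \<Rightarrow> 'act) measure" where
  "AS Act r = PiM {1..r} (\<lambda>k. count_space (Act k))"

definition acts :: "(nat \<Rightarrow> 'w \<Rightarrow> 'act) \<Rightarrow> nat \<Rightarrow> 'w \<Rightarrow> (nat \<Rightarrow> 'act)" where
  "acts A r \<omega> = restrict (\<lambda>k. A k \<omega>) {1..r}"

definition histfix :: "(nat \<Rightarrow> (nat \<Rightarrow> 'act) \<Rightarrow> 'w \<Rightarrow> (nat \<Rightarrow> real)) \<Rightarrow> (nat \<Rightarrow> 'act) \<Rightarrow> nat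
    \<Rightarrow> 'w \<Rightarrow> (nat \<Rightarrow> nat \<Rightarrow> real)" where
  "histfix X a t \<omega> = (\<lambda>r\<in>{..t}. X r (restrict a {1..r}) \<omega>)"

definition hist :: "(nat \<Rightarrow> (nat \<Rightarrow> 'act) \<Rightarrow> 'w \<Rightarrow> (nat \<Rightarrow> real)) \<Rightarrow> (nat \<Rightarrow> 'w \<Rightarrow> 'act) \<Rightarrow> nat
    \<Rightarrow> 'w \<Rightarrow> (nat \<Rightarrow> nat \<Rightarrow> real)" where
  "hist X A t \<omega> = (\<lambda>r\<in>{..t}. X r (acts A r \<omega>) \<omega>)"

definition obs :: "(nat \<Rightarrow> (nat \<Rightarrow> 'act) \<Rightarrow> 'w \<Rightarrow> (nat \<Rightarrow> real)) \<Rightarrow> (nat \<Rightarrow> 'w \<Rightarrow> 'act)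
    \<Rightarrow> ((nat \<Rightarrow> 'act) \<Rightarrow> 'w \<Rightarrow> real) \<Rightarrow> nat \<Rightarrow> nat
    \<Rightarrow> 'w \<Rightarrow> (nat \<Rightarrow> nat \<Rightarrow> real) \<times> (nat \<Rightarrow> 'act) \<times> real" where
  "obs X A Y T t \<omega> = (hist X A T \<omega>, acts A T \<omega>, Y (acts A t \<omega>) \<omega>)"

definition OS :: "(nat \<Rightarrow> nat) \<Rightarrow> (nat \<Rightarrow> 'act set) \<Rightarrow> nat
    \<Rightarrow> ((nat \<Rightarrow> nat \<Rightarrow> real) \<times> (nat \<Rightarrow> 'act) \<times> real) measure" where
  "OS d Act T = HX d T \<Otimes>\<^sub>M (AS Act T \<Otimes>\<^sub>M (borel :: real measure))"

definition PO_family :: "'w measure \<Rightarrow> (nat \<Rightarrow> nat) \<Rightarrow> (nat \<Rightarrow> 'act set) \<Rightarrow> nat \<Rightarrow> nat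
    \<Rightarrow> (nat \<Rightarrow> (nat \<Rightarrow> 'act) \<Rightarrow> 'w \<Rightarrow> (nat \<Rightarrow> real)) \<Rightarrow> (nat \<Rightarrow> 'w \<Rightarrow> 'act)
    \<Rightarrow> ((nat \<Rightarrow> 'act) \<Rightarrow> 'w \<Rightarrow> real) \<Rightarrow> bool" where
  "PO_family M d Act T t X A Y \<longleftrightarrow>
     prob_space M \<and>
     (\<forall>r\<le>T. \<forall>a\<in>(\<Pi>\<^sub>E k\<in>{1..r}. Act k). X r a \<in> measurable M (XS d r)) \<and>
     (\<forall>k\<in>{1..T}. A k \<in> measurable M (count_space (Act k))) \<and>
     (\<forall>a\<in>(\<Pi>\<^sub>E k\<in>{1..t}. Act k). Y a \<in> borel_measurable M)"

text \<open>The alternative families are quantified over all probability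
  spaces on the sample type 'w \<times> real.  E[Y~(a) | X~_{0:t}(a)] is
  real_cond_exp w.r.t. the sigma-algebra generated by X~_{0:t}(a_{1:t}).\<close>
definition permissible :: "'w measure \<Rightarrow> (nat \<Rightarrow> nat) \<Rightarrow> (nat \<Rightarrow> 'act set) \<Rightarrow> nat \<Rightarrow> nat
    \<Rightarrow> (nat \<Rightarrow> (nat \<Rightarrow> 'act) \<Rightarrow> 'w \<Rightarrow> (nat \<Rightarrow> real)) \<Rightarrow> (nat \<Rightarrow> 'w \<Rightarrow> 'act)
    \<Rightarrow> ((nat \<Rightarrow> 'act) \<Rightarrow> 'w \<Rightarrow> real) \<Rightarrow> (nat \<Rightarrow> 'act)
    \<Rightarrow> ((nat \<Rightarrow> nat \<Rightarrow> real) \<Rightarrow> real) \<Rightarrow> ((nat \<Rightarrow> nat \<Rightarrow> real) \<Rightarrow> real)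
    \<Rightarrow> ((nat \<Rightarrow> nat \<Rightarrow> real) \<Rightarrow> real) \<Rightarrow> ((nat \<Rightarrow> nat \<Rightarrow> real) \<Rightarrow> real) \<Rightarrow> bool" where
  "permissible M d Act T t X A Y a ylo yup glo gup \<longleftrightarrow>
     (\<forall>(M' :: ('w \<times> real) measure) X' A' Y'.
        PO_family M' d Act T t X' A' Y' \<and>
        distr M' (OS d Act T) (obs X' A' Y' T t) = distr M (OS d Act T) (obs X A Y T t) \<and>
        (AE \<omega> in M'. ylo (histfix X' a t \<omega>) \<le> Y' a \<omega> \<and> Y' a \<omega> \<le> yup (histfix X' a t \<omega>))
      \<longrightarrow>
        (AE \<omega> in M'.
           glo (histfix X' a t \<omega>)
             \<le> real_cond_exp M' (vimage_algebra (space M') (histfix X' a t) (HX d t)) (Y' a) \<omega> \<and>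
           real_cond_exp M' (vimage_algebra (space M') (histfix X' a t) (HX d t)) (Y' a) \<omega>
             \<le> gup (histfix X' a t \<omega>)))"

end

theory Submission
  imports Defs
begin

lemma singleton_PiM:
  assumes "finite I" "x \<in> space (PiM I N)" "\<And>i. i \<in> I \<Longrightarrow> {x i} \<in> sets (N i)"
  shows "{x} \<in> sets (PiM I N)"
proof -
  have "{x} = (\<Pi>\<^sub>E i\<in>I. {x i})"
    using assms(2) by (auto simp: space_PiM PiE_iff extensional_def fun_eq_iff) metis
  then show ?thesis using sets_PiM_I_finite[OF assms(1), of "\<lambda>i. {x i}" N] assms(3) by simp
qed

lemma singleton_HX:
  assumes "x \<in> space (HX d t)"
  shows "{x} \<in> sets (HX d t)"
  unfolding HX_def
proof (rule singleton_PiM)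
  show "x \<in> space (Pi\<^sub>M {..t} (XS d))" using assms unfolding HX_def .
  fix i assume i: "i \<in> {..t}"
  then have xi: "x i \<in> space (XS d i)" using assms unfolding HX_def by (auto simp: space_PiM)
  show "{x i} \<in> sets (XS d i)" unfolding XS_def
    by (rule singleton_PiM) (use xi in \<open>auto simp: XS_def\<close>)
qed simp

lemma acts_restrict:
  assumes "s \<le> t"
  shows "acts A s w = restrict (acts A t w) {1..s}"
  using assms by (auto simp: acts_def fun_eq_iff)

lemma atom_condexp:
  assumes N: "prob_space N" and h: "h \<in> measurable N H" and x: "{x} \<in> sets H"
    and Z: "Z \<in> borel_measurable N"
    and pos: "emeasure N {\<omega>\<in>space N. h \<omega> = x} > 0"
    and Zv: "AE \<omega> in N. h \<omega> = x \<longrightarrow> Z \<omega> = v"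
    and w: "w \<in> space N" "h w = x"
  shows "real_cond_exp N (vimage_algebra (space N) h H) Z w = v"
proof -
  interpret prob_space N by fact
  define F where "F = vimage_algebra (space N) h H"
  have subF: "subalgebra N F"
    unfolding subalgebra_def F_def using sets_image_in_sets[OF refl h] by simp
  interpret finite_measure_subalgebra N F
    by unfold_locales (rule subF)
  define E where "E = h -` {x} \<inter> space N"
  have EF: "E \<in> sets F" unfolding E_def F_def by (rule in_vimage_algebra[OF x])
  have EN: "E \<in> sets N" using EF subF unfolding subalgebra_def by auto
  have Eeq: "E = {\<omega>\<in>space N. h \<omega> = x}" unfolding E_def by auto
  have Epos: "emeasure N E > 0" using pos Eeq by simp
  have Efin: "emeasure N E < \<infinity>" by (simp add: less_top[symmetric])
  have hF: "h \<in> space N \<rightarrow> space H" using h by (auto simp: measurable_def)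
  have key: "nn_cond_exp N F f w = ennreal u"
    if f: "f \<in> borel_measurable N" and fu: "AE \<omega> in N. \<omega> \<in> E \<longrightarrow> f \<omega> = ennreal u" for f u
  proof -
    let ?g = "nn_cond_exp N F f"
    have gF: "?g \<in> borel_measurable F" by simp
    have const: "?g \<omega> = ?g w" if "\<omega> \<in> E" for \<omega>
    proof -
      have "?g -` {?g w} \<inter> space F \<in> sets F"
        using measurable_sets[OF gF, of "{?g w}"] by simp
      then obtain B where B: "B \<in> sets H" "?g -` {?g w} \<inter> space N = h -` B \<inter> space N"
        unfolding F_def sets_vimage_algebra2[OF hF] by auto
      have "w \<in> h -` B \<inter> space N" using B(2)[symmetric] w by auto
      then have "x \<in> B" using w by auto
      then have "\<omega> \<in> h -` B \<inter> space N" using that unfolding E_def by auto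
      then show ?thesis using B(2) by auto
    qed
    have "(\<integral>\<^sup>+ \<omega>. indicator E \<omega> * ?g \<omega> \<partial>N) = (\<integral>\<^sup>+ \<omega>. indicator E \<omega> * f \<omega> \<partial>N)"
      by (rule nn_cond_exp_intg) (use EF f in simp_all)
    moreover have "(\<integral>\<^sup>+ \<omega>. indicator E \<omega> * ?g \<omega> \<partial>N) = (\<integral>\<^sup>+ \<omega>. ?g w * indicator E \<omega> \<partial>N)"
      by (rule nn_integral_cong) (auto simp: indicator_def const)
    moreover have "(\<integral>\<^sup>+ \<omega>. indicator E \<omega> * f \<omega> \<partial>N) = (\<integral>\<^sup>+ \<omega>. ennreal u * indicator E \<omega> \<partial>N)"
      by (rule nn_integral_cong_AE) (use fu in \<open>auto simp: indicator_def\<close>)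
    ultimately have "?g w * emeasure N E = ennreal u * emeasure N E"
      using EN by (simp add: nn_integral_cmult_indicator)
    then have "?g w * emeasure N E / emeasure N E = ennreal u * emeasure N E / emeasure N E"
      by simp
    then show ?thesis using Epos Efin by (simp add: ennreal_mult_divide_eq)
  qed
  have "\<omega> \<in> E \<Longrightarrow> h \<omega> = x" for \<omega> unfolding E_def by auto
  then have ZE: "AE \<omega> in N. \<omega> \<in> E \<longrightarrow> Z \<omega> = v" using Zv by auto
  have k1: "nn_cond_exp N F (\<lambda>\<omega>. ennreal (Z \<omega>)) w = ennreal v"
    by (rule key) (use Z ZE in auto)
  have k2: "nn_cond_exp N F (\<lambda>\<omega>. ennreal (- Z \<omega>)) w = ennreal (- v)"
    by (rule key) (use Z ZE in auto)
  show ?thesis unfolding real_cond_exp_def F_def[symmetric] k1 k2 by (cases "v \<ge> 0") (simp_all add: enn2real_ennreal ennreal_neg)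
qed


lemma key:
  fixes M :: "'w measure"
    and d :: "nat \<Rightarrow> nat"
    and Act :: "nat \<Rightarrow> 'act set"
    and T t :: nat
    and X :: "nat \<Rightarrow> (nat \<Rightarrow> 'act) \<Rightarrow> 'w \<Rightarrow> (nat \<Rightarrow> real)"
    and A :: "nat \<Rightarrow> 'w \<Rightarrow> 'act"
    and Y :: "(nat \<Rightarrow> 'act) \<Rightarrow> 'w \<Rightarrow> real"
    and a :: "nat \<Rightarrow> 'act"
    and ylo yup glo gup sel :: "(nat \<Rightarrow> nat \<Rightarrow> real) \<Rightarrow> real"
  assumes T: "1 \<le> T"
    and t: "t \<in> {1..T}"
    and Act_fin: "\<forall>k. finite (Act k)"
    and fam: "PO_family M d Act T t X A Y"
    and a: "a \<in> (\<Pi>\<^sub>E k\<in>{1..t}. Act k)"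
    and ylo_meas: "ylo \<in> borel_measurable (HX d t)"
    and yup_meas: "yup \<in> borel_measurable (HX d t)"
    and Ybounds: "AE \<omega> in M. ylo (histfix X a t \<omega>) \<le> Y a \<omega> \<and> Y a \<omega> \<le> yup (histfix X a t \<omega>)"
    and X0: "AE \<omega> in M. X 0 (\<lambda>_. undefined) \<omega> = c"
    and A1: "measure M {\<omega> \<in> space M. A 1 \<omega> \<noteq> a 1} > 0"
    and s: "s \<in> {1..t}" and s0: "\<forall>x. measure M {\<omega> \<in> space M. X s (acts A s \<omega>) \<omega> = x} = 0"
    and perm: "permissible M d Act T t X A Y a ylo yup glo gup"
    and sel_meas: "sel \<in> borel_measurable (HX d t)"
    and sel_bd: "\<And>z. ylo z \<le> yup z \<Longrightarrow> ylo z \<le> sel z \<and> sel z \<le> yup z"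
    and x: "x \<in> space (HX d t)" and x0: "x 0 = c" and xb: "ylo x \<le> yup x"
  shows "glo x \<le> sel x \<and> sel x \<le> gup x"
proof -
  have P: "prob_space M" using fam unfolding PO_family_def by auto
  interpret prob_space M by fact
  have Xm: "\<And>r b. r \<le> T \<Longrightarrow> b \<in> (\<Pi>\<^sub>E k\<in>{1..r}. Act k) \<Longrightarrow> X r b \<in> measurable M (XS d r)"
    using fam unfolding PO_family_def by auto
  have Am: "\<And>k. k \<in> {1..T} \<Longrightarrow> A k \<in> measurable M (count_space (Act k))"
    using fam unfolding PO_family_def by auto
  have Ym: "\<And>b. b \<in> (\<Pi>\<^sub>E k\<in>{1..t}. Act k) \<Longrightarrow> Y b \<in> borel_measurable M"
    using fam unfolding PO_family_def by auto
  have t1: "1 \<le> t" "t \<le> T" using t by auto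
  have ra: "restrict a {1..r} \<in> (\<Pi>\<^sub>E k\<in>{1..r}. Act k)" if "r \<le> t" for r
    using a that by (auto simp: PiE_iff)
  have xr: "x r \<in> space (XS d r)" if "r \<le> t" for r
    using x that unfolding HX_def by (auto simp: space_PiM)
  have xext: "restrict x {..t} = x" using x unfolding HX_def by (auto simp: space_PiM PiE_iff extensional_restrict)
  define free where "free = {w \<in> space M. A 1 w \<noteq> a 1}"
  have free_sets: "free \<in> sets M"
  proof -
    have "free = space M - A 1 -` {a 1} \<inter> space M" unfolding free_def by auto
    moreover have "A 1 -` {a 1} \<inter> space M \<in> sets M"
      using measurable_sets[OF Am[of 1], of "{a 1}"] a t1 T by (auto simp: PiE_iff)
    ultimately show ?thesis by auto
  qed
  define X'' where "X'' r b w = (if 1 \<le> r \<and> r \<le> t \<and> b = restrict a {1..r} \<and> A 1 w \<noteq> a 1 then x r else X r b w)"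
    for r b w
  define h where "h w = histfix X'' a t w" for w
  define Y'' where "Y'' b w = (if b = a \<and> acts A t w \<noteq> a then sel (h w) else Y b w)" for b w
  define \<iota> :: "'w \<Rightarrow> 'w \<times> real" where "\<iota> w = (w, 0::real)" for w
  define M' where "M' = embed_measure M \<iota>"
  define X' :: "nat \<Rightarrow> (nat \<Rightarrow> 'act) \<Rightarrow> 'w \<times> real \<Rightarrow> (nat \<Rightarrow> real)" where "X' r b p = X'' r b (fst p)" for r b p
  define A' :: "nat \<Rightarrow> 'w \<times> real \<Rightarrow> 'act" where "A' k p = A k (fst p)" for k p
  define Y' :: "(nat \<Rightarrow> 'act) \<Rightarrow> 'w \<times> real \<Rightarrow> real" where "Y' b p = Y'' b (fst p)" for b p
  have inj: "inj \<iota>" unfolding \<iota>_def by (auto intro: injI)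
  have X''m: "X'' r b \<in> measurable M (XS d r)" if rb: "r \<le> T" "b \<in> (\<Pi>\<^sub>E k\<in>{1..r}. Act k)" for r b
  proof (cases "1 \<le> r \<and> r \<le> t \<and> b = restrict a {1..r}")
    case True
    have "(\<lambda>w. if w \<in> free then x r else X r b w) \<in> measurable M (XS d r)"
      by (rule measurable_If_set) (use xr True Xm[OF rb] free_sets in auto)
    moreover have "\<And>w. w \<in> space M \<Longrightarrow> X'' r b w = (if w \<in> free then x r else X r b w)"
      using True unfolding X''_def free_def by auto
    ultimately show ?thesis by (subst measurable_cong) auto
  next
    case False
    then have "X'' r b w = X r b w" for w unfolding X''_def by (intro if_not_P) blast
    then have "X'' r b = X r b" by (rule ext)
    then show ?thesis using Xm[OF rb] by simp
  qed
  have hm: "h \<in> measurable M (HX d t)"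
    unfolding h_def[abs_def] histfix_def HX_def
    by (rule measurable_restrict) (use X''m ra t1 in auto)
  have actsm: "acts A t \<in> measurable M (AS Act t)"
    unfolding acts_def[abs_def] AS_def
    by (rule measurable_restrict) (use Am t1 in auto)
  have aAS: "a \<in> space (AS Act t)" using a unfolding AS_def by (simp add: space_PiM)
  have a_sing: "{a} \<in> sets (AS Act t)"
    unfolding AS_def by (rule singleton_PiM) (use aAS a in \<open>auto simp: AS_def PiE_iff\<close>)
  define D where "D = acts A t -` {a} \<inter> space M"
  have D_sets: "D \<in> sets M" unfolding D_def by (rule measurable_sets[OF actsm a_sing])
  have Y''m: "Y'' b \<in> borel_measurable M" if b: "b \<in> (\<Pi>\<^sub>E k\<in>{1..t}. Act k)" for b
  proof (cases "b = a")
    case True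
    have "(\<lambda>w. if w \<in> D then Y a w else sel (h w)) \<in> borel_measurable M"
      by (rule measurable_If_set) (use Ym[OF a] D_sets measurable_comp[OF hm sel_meas] in \<open>auto simp: comp_def\<close>)
    moreover have "\<And>w. w \<in> space M \<Longrightarrow> Y'' b w = (if w \<in> D then Y a w else sel (h w))"
      using True unfolding Y''_def D_def by auto
    ultimately show ?thesis by (subst measurable_cong) auto
  next
    case False
    then have "Y'' b w = Y b w" for w unfolding Y''_def by (intro if_not_P) blast
    then have "Y'' b = Y b" by (rule ext)
    then show ?thesis using Ym[OF b] by simp
  qed
  have X''_obs: "X'' r (acts A r w) w = X r (acts A r w) w" for r w
    unfolding X''_def
  proof (rule if_not_P, rule notI)
    assume H: "1 \<le> r \<and> r \<le> t \<and> acts A r w = restrict a {1..r} \<and> A 1 w \<noteq> a 1"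
    then have "acts A r w 1 = restrict a {1..r} 1" by metis
    moreover have "acts A r w 1 = A 1 w" using H unfolding acts_def by (intro restrict_apply') auto
    moreover have "restrict a {1..r} 1 = a 1" using H by (intro restrict_apply') auto
    ultimately show False using H by simp
  qed
  have Y''_obs: "Y'' (acts A t w) w = Y (acts A t w) w" for w
    unfolding Y''_def by simp
  have actsA': "acts A' r p = acts A r (fst p)" for r p
    unfolding acts_def A'_def by simp
  have obs_eq: "obs X' A' Y' T t = (\<lambda>p. obs X A Y T t (fst p))"
    by (rule ext) (simp add: obs_def hist_def actsA' X'_def Y'_def X''_obs Y''_obs)
  have spM': "space M' = \<iota> ` space M" unfolding M'_def by (simp add: space_embed_measure)
  have em_img: "emeasure M' (\<iota> ` B) = emeasure M B" for B
  proof (cases "B \<in> sets M")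
    case True
    then show ?thesis unfolding M'_def by (simp add: emeasure_embed_measure_image inj)
  next
    case False
    have "\<iota> ` B \<notin> sets M'"
    proof
      assume "\<iota> ` B \<in> sets M'"
      then obtain C where C: "C \<in> sets M" "\<iota> ` B = \<iota> ` C"
        unfolding M'_def sets_embed_measure[OF inj] by auto
      then have "B = C" using inj by (simp add: inj_image_eq_iff)
      then show False using C False by simp
    qed
    then show ?thesis using False by (simp add: emeasure_notin_sets)
  qed
  have distr_eq: "distr M' (OS d Act T) (obs X' A' Y' T t) = distr M (OS d Act T) (obs X A Y T t)"
    unfolding obs_eq distr_def
  proof (rule measure_of_eq)
    show "sets (OS d Act T) \<subseteq> Pow (space (OS d Act T))" by (rule sets.space_closed)
    fix S
    have "(\<lambda>p. obs X A Y T t (fst p)) -` S \<inter> space M' = \<iota> ` (obs X A Y T t -` S \<inter> space M)"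
      unfolding spM' \<iota>_def by auto
    then show "emeasure M' ((\<lambda>p. obs X A Y T t (fst p)) -` S \<inter> space M') = emeasure M (obs X A Y T t -` S \<inter> space M)"
      by (simp add: em_img)
  qed
  have emb: "g \<in> measurable M' N" if "(\<lambda>w. g (\<iota> w)) \<in> measurable M N" for g :: "'w \<times> real \<Rightarrow> 'z" and N
    unfolding M'_def by (rule measurable_embed_measure1) (rule that)
  have fst\<iota>: "fst (\<iota> w) = w" for w unfolding \<iota>_def by simp
  have probM': "prob_space M'"
    by (rule prob_spaceI) (simp add: spM' em_img emeasure_space_1)
  have fam': "PO_family M' d Act T t X' A' Y'"
    unfolding PO_family_def
  proof (intro conjI probM' allI impI ballI)
    fix r b assume "r \<le> T" "b \<in> (\<Pi>\<^sub>E k\<in>{1..r}. Act k)"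
    then show "X' r b \<in> measurable M' (XS d r)"
      by (intro emb) (simp add: X'_def fst\<iota> X''m)
  next
    fix k assume "k \<in> {1..T}"
    then show "A' k \<in> measurable M' (count_space (Act k))"
      by (intro emb) (simp add: A'_def fst\<iota> Am)
  next
    fix b assume "b \<in> (\<Pi>\<^sub>E k\<in>{1..t}. Act k)"
    then show "Y' b \<in> borel_measurable M'"
      by (intro emb) (simp add: Y'_def fst\<iota> Y''m)
  qed
  have hfix: "histfix X' a t p = h (fst p)" for p
    unfolding h_def histfix_def X'_def by simp
  have h1: "h w = histfix X a t w" if "A 1 w = a 1" for w
    unfolding h_def histfix_def X''_def using that by simp
  have r0: "restrict a {1..0::nat} = (\<lambda>_. undefined)" by (simp add: fun_eq_iff)
  have h2: "h w = x" if "A 1 w \<noteq> a 1" "X 0 (\<lambda>_. undefined) w = c" for w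
  proof -
    have "h w = restrict x {..t}"
      unfolding h_def histfix_def
    proof (rule restrict_ext)
      fix r assume r: "r \<in> {..t}"
      show "X'' r (restrict a {1..r}) w = x r"
      proof (cases "r = 0")
        case True
        then show ?thesis unfolding X''_def using that x0 r0 by simp
      next
        case False
        then show ?thesis unfolding X''_def using that r by simp
      qed
    qed
    then show ?thesis using xext by simp
  qed
  have h3: "acts A t w \<noteq> a" if "A 1 w \<noteq> a 1" for w
  proof
    assume "acts A t w = a"
    then have "acts A t w 1 = a 1" by simp
    moreover have "acts A t w 1 = A 1 w" unfolding acts_def using t1 by simp
    ultimately show False using that by simp
  qed
  have bounds': "AE \<omega> in M'. ylo (histfix X' a t \<omega>) \<le> Y' a \<omega> \<and> Y' a \<omega> \<le> yup (histfix X' a t \<omega>)"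
    unfolding M'_def AE_embed_measure[OF inj] hfix Y'_def fst\<iota>
    using Ybounds X0
  proof eventually_elim
    case (elim w)
    show ?case
    proof (cases "A 1 w = a 1")
      case True
      have b: "ylo (histfix X a t w) \<le> yup (histfix X a t w)" using elim by linarith
      show ?thesis using True elim sel_bd[OF b] unfolding Y''_def h1[OF True] by auto
    next
      case False
      show ?thesis using False elim sel_bd[OF xb] h3[OF False] unfolding Y''_def h2[OF False elim(2)] by auto
    qed
  qed
  define CE where "CE = real_cond_exp M' (vimage_algebra (space M') (histfix X' a t) (HX d t)) (Y' a)"
  have ae: "AE \<omega> in M'. glo (histfix X' a t \<omega>) \<le> CE \<omega> \<and> CE \<omega> \<le> gup (histfix X' a t \<omega>)"
    using perm fam' distr_eq bounds' unfolding permissible_def CE_def by blast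
  have Hsets: "{w\<in>space M. h w = x} \<in> sets M"
    using measurable_sets[OF hm singleton_HX[OF x]] by (simp add: vimage_def Int_def conj_commute)
  have pos: "emeasure M' {p\<in>space M'. histfix X' a t p = x} > 0"
  proof -
    have eqs: "{p\<in>space M'. histfix X' a t p = x} = \<iota> ` {w\<in>space M. h w = x}"
      unfolding spM' hfix by (auto simp: fst\<iota>)
    have "emeasure M free \<le> emeasure M {w\<in>space M. h w = x}"
      by (rule emeasure_mono_AE[OF _ Hsets]) (use X0 h2 in \<open>auto simp: free_def\<close>)
    moreover have "emeasure M free > 0"
      using A1 free_sets unfolding free_def by (simp add: emeasure_eq_measure)
    ultimately show ?thesis unfolding eqs em_img by simp
  qed
  have actsm_r: "acts A r \<in> measurable M (AS Act r)" if "r \<le> T" for r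
    unfolding acts_def[abs_def] AS_def
    by (rule measurable_restrict) (use Am that in auto)
  have sing_AS: "{b} \<in> sets (AS Act r)" if "b \<in> (\<Pi>\<^sub>E k\<in>{1..r}. Act k)" for b r
    unfolding AS_def by (rule singleton_PiM) (use that in \<open>auto simp: space_PiM PiE_iff\<close>)
  have sT: "s \<le> T" "s \<le> t" "1 \<le> s" using s t1 by auto
  define Sf where "Sf = {\<omega> \<in> space M. X s (acts A s \<omega>) \<omega> = x s}"
  have acts_in: "acts A s w \<in> (\<Pi>\<^sub>E k\<in>{1..s}. Act k)" if "w \<in> space M" for w
    using measurable_space[OF actsm_r[OF sT(1)] that] unfolding AS_def by (simp add: space_PiM)
  have Sf_eq: "Sf = (\<Union>b\<in>(\<Pi>\<^sub>E k\<in>{1..s}. Act k). (acts A s -` {b} \<inter> space M) \<inter> (X s b -` {x s} \<inter> space M))"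
    unfolding Sf_def using acts_in by auto
  have xs_sing: "{x s} \<in> sets (XS d s)"
    unfolding XS_def by (rule singleton_PiM) (use xr[OF sT(2)] in \<open>auto simp: XS_def\<close>)
  have Sf_sets: "Sf \<in> sets M"
    unfolding Sf_eq
  proof (rule sets.finite_UN)
    show "finite (\<Pi>\<^sub>E k\<in>{1..s}. Act k)" using Act_fin by (intro finite_PiE) auto
    fix b assume b: "b \<in> (\<Pi>\<^sub>E k\<in>{1..s}. Act k)"
    show "acts A s -` {b} \<inter> space M \<inter> (X s b -` {x s} \<inter> space M) \<in> sets M"
      using measurable_sets[OF actsm_r[OF sT(1)] sing_AS[OF b]]
            measurable_sets[OF Xm[OF sT(1) b] xs_sing] by auto
  qed
  have Sf_null: "AE w in M. w \<notin> Sf"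
  proof -
    have "measure M Sf = 0" using s0 unfolding Sf_def by blast
    then have "emeasure M Sf = 0" using Sf_sets by (simp add: emeasure_eq_measure)
    then show ?thesis using Sf_sets by (subst AE_iff_measurable[OF Sf_sets]) (auto simp: Sf_def)
  qed
  have atomY: "AE p in M'. histfix X' a t p = x \<longrightarrow> Y' a p = sel x"
    unfolding M'_def AE_embed_measure[OF inj] hfix Y'_def fst\<iota>
    using Sf_null AE_space
  proof eventually_elim
    case (elim w)
    show ?case
    proof
      assume hx: "h w = x"
      show "Y'' a w = sel x"
      proof (cases "acts A t w = a")
        case False
        then show ?thesis unfolding Y''_def hx by simp
      next
        case True
        then have "A 1 w = a 1" using h3 by blast
        then have "histfix X a t w = x" using hx h1 by simp
        then have "X s (restrict a {1..s}) w = x s" unfolding histfix_def using sT by (metis atMost_iff restrict_apply')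
        moreover have "acts A s w = restrict a {1..s}" using acts_restrict[OF sT(2), of A w] True by simp
        ultimately have "w \<in> Sf" unfolding Sf_def using elim by simp
        then show ?thesis using elim by simp
      qed
    qed
  qed
  have h'm: "histfix X' a t \<in> measurable M' (HX d t)"
    by (intro emb) (simp add: hfix fst\<iota> hm)
  have CEv: "CE p = sel x" if "p \<in> space M'" "histfix X' a t p = x" for p
    unfolding CE_def
    by (rule atom_condexp[OF _ h'm singleton_HX[OF x] _ pos atomY that])
       (use fam' Y''m a in \<open>auto simp: PO_family_def\<close>)
  show ?thesis
  proof (rule ccontr)
    assume nc: "\<not> ?thesis"
    have "AE p in M'. histfix X' a t p \<noteq> x"
      using ae AE_space
    proof eventually_elim
      case (elim p)
      show ?case
      proof
        assume "histfix X' a t p = x"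
        then show False using elim CEv[of p] nc by auto
      qed
    qed
    moreover have "{p\<in>space M'. histfix X' a t p = x} \<in> sets M'"
      using measurable_sets[OF h'm singleton_HX[OF x]] by (simp add: vimage_def Int_def conj_commute)
    ultimately have "emeasure M' {p\<in>space M'. histfix X' a t p = x} = 0"
      by (subst (asm) AE_iff_measurable[OF _ refl]) simp_all
    then show False using pos by simp
  qed
qed

theorem theorem4p7:
  fixes M :: "'w measure"
    and d :: "nat \<Rightarrow> nat"
    and Act :: "nat \<Rightarrow> 'act set"
    and T t :: nat
    and X :: "nat \<Rightarrow> (nat \<Rightarrow> 'act) \<Rightarrow> 'w \<Rightarrow> (nat \<Rightarrow> real)"
    and A :: "nat \<Rightarrow> 'w \<Rightarrow> 'act"
    and Y :: "(nat \<Rightarrow> 'act) \<Rightarrow> 'w \<Rightarrow> real"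
    and a :: "nat \<Rightarrow> 'act"
    and ylo yup glo gup :: "(nat \<Rightarrow> nat \<Rightarrow> real) \<Rightarrow> real"
  assumes T: "1 \<le> T"
    and t: "t \<in> {1..T}"
    and Act_fin: "\<forall>k. finite (Act k)"
    and fam: "PO_family M d Act T t X A Y"
    and a: "a \<in> (\<Pi>\<^sub>E k\<in>{1..t}. Act k)"
    and ylo_meas: "ylo \<in> borel_measurable (HX d t)"
    and yup_meas: "yup \<in> borel_measurable (HX d t)"
    and Ybounds: "AE \<omega> in M. ylo (histfix X a t \<omega>) \<le> Y a \<omega> \<and> Y a \<omega> \<le> yup (histfix X a t \<omega>)"
    and X0_const: "\<exists>c. AE \<omega> in M. X 0 (\<lambda>_. undefined) \<omega> = c"
    and A1: "measure M {\<omega> \<in> space M. A 1 \<omega> \<noteq> a 1} > 0"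
    and no_atoms: "\<exists>s\<in>{1..t}. \<forall>x. measure M {\<omega> \<in> space M. X s (acts A s \<omega>) \<omega> = x} = 0"
    and glo_meas: "glo \<in> borel_measurable (HX d t)"
    and gup_meas: "gup \<in> borel_measurable (HX d t)"
    and perm: "permissible M d Act T t X A Y a ylo yup glo gup"
  shows "AE \<omega> in M. glo (histfix X a t \<omega>) \<le> ylo (histfix X a t \<omega>)
                  \<and> gup (histfix X a t \<omega>) \<ge> yup (histfix X a t \<omega>)"
proof -
  obtain c where X0: "AE \<omega> in M. X 0 (\<lambda>_. undefined) \<omega> = c" using X0_const by blast
  obtain s where s: "s \<in> {1..t}" and s0: "\<forall>x. measure M {\<omega> \<in> space M. X s (acts A s \<omega>) \<omega> = x} = 0"
    using no_atoms by blast
  have lo: "glo z \<le> ylo z" if "z \<in> space (HX d t)" "z 0 = c" "ylo z \<le> yup z" for z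
    using key[OF T t Act_fin fam a ylo_meas yup_meas Ybounds X0 A1 s s0 perm ylo_meas _ that] by auto
  have up: "yup z \<le> gup z" if "z \<in> space (HX d t)" "z 0 = c" "ylo z \<le> yup z" for z
    using key[OF T t Act_fin fam a ylo_meas yup_meas Ybounds X0 A1 s s0 perm yup_meas _ that] by auto
  have Xm: "\<And>r b. r \<le> T \<Longrightarrow> b \<in> (\<Pi>\<^sub>E k\<in>{1..r}. Act k) \<Longrightarrow> X r b \<in> measurable M (XS d r)"
    using fam unfolding PO_family_def by auto
  have ra: "restrict a {1..r} \<in> (\<Pi>\<^sub>E k\<in>{1..r}. Act k)" if "r \<le> t" for r
    using a that by (auto simp: PiE_iff)
  have hXm: "histfix X a t \<in> measurable M (HX d t)"
    unfolding histfix_def[abs_def] HX_def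
    by (rule measurable_restrict) (use Xm ra t in auto)
  have r0: "restrict a {1..0::nat} = (\<lambda>_. undefined)" by (simp add: fun_eq_iff)
  show ?thesis
    using Ybounds X0 AE_space
  proof eventually_elim
    case (elim w)
    have sp: "histfix X a t w \<in> space (HX d t)" using measurable_space[OF hXm elim(3)] .
    have z0: "histfix X a t w 0 = c" using elim(2) r0 unfolding histfix_def by simp
    have b: "ylo (histfix X a t w) \<le> yup (histfix X a t w)" using elim(1) by linarith
    show ?case using lo[OF sp z0 b] up[OF sp z0 b] by simp
  qed
qed

end
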